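(* Let $A$ and $B$ be nonzero integers, let $g=\gcd(A,B)$, write $A=ga$, $B=gb$, and let $L$ be a positive integer such that every prime divisor of $L$ divides $g$ (i.e. $\ell=\prod_{p\nmid g}p^{\nu_p(L)}=1$). Let $\gamma(L)=\max_{p\mid g}\left\lceil \nu_p(L)/\nu_p(g)\right\rceil$ (with $\gamma(L)=0$ if $g=1$). Then $L\in G_{(A,B)}$ if and only if there exists a positive integer $K\ge\gamma(L)$. In this case $L\in G_{(A,B)}$ and every positive integer $K\ge\gamma(L)$ satisfies $L\mid(A^K+B^K)$.
   Context: For nonzero integers $x,y$, $G_{(x,y)}$ is the set of positive integers $n$ such that $n\mid(x^k+y^k)$ for some positive integer $k$. $\nu_p$ is the $p$-adic valuation; products and maxima over $p$ range over primes. *)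

theory Defs
  imports "HOL-Computational_Algebra.Primes" Complex_Main
begin

definition G_set :: "int \<Rightarrow> int \<Rightarrow> nat set" where
  "G_set x y = {n. n > 0 \<and> (\<exists>k::nat. k > 0 \<and> int n dvd x ^ k + y ^ k)}"

definition gamma :: "nat \<Rightarrow> nat \<Rightarrow> nat" where
  "gamma g L = Max (insert 0
     ((\<lambda>p. nat \<lceil>real (multiplicity p L) / real (multiplicity p g)\<rceil>) ` prime_factors g))"

end

theory Submission
  imports Defs
begin

lemma key_dvd:
  fixes g L K :: nat
  assumes g0: "g > 0" and L0: "L > 0"
    and pd: "\<forall>p::nat. prime p \<and> p dvd L \<longrightarrow> p dvd g"
    and K: "K \<ge> gamma g L"
  shows "L dvd g ^ K"
proof (rule multiplicity_le_imp_dvd)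
  show "L \<noteq> 0" using L0 by simp
  fix p :: nat assume p: "prime p"
  show "multiplicity p L \<le> multiplicity p (g ^ K)"
  proof (cases "p dvd L")
    case False
    then show ?thesis by (simp add: not_dvd_imp_multiplicity_0)
  next
    case True
    then have pg: "p dvd g" using pd p by blast
    have mg: "multiplicity p g > 0" using pg p g0
      by (simp add: prime_multiplicity_gt_zero_iff)
    have pf: "p \<in> prime_factors g" using pg p g0
      by (simp add: prime_factors_multiplicity mg)
    let ?c = "nat \<lceil>real (multiplicity p L) / real (multiplicity p g)\<rceil>"
    have fin: "finite (insert 0
     ((\<lambda>p. nat \<lceil>real (multiplicity p L) / real (multiplicity p g)\<rceil>) ` prime_factors g))"
      by simp
    have "?c \<le> gamma g L" unfolding gamma_def
      by (rule Max_ge[OF fin]) (use pf in blast)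
    with K have cK: "?c \<le> K" by simp
    have "real (multiplicity p L) / real (multiplicity p g) \<le> real K"
      using cK by linarith
    then have "real (multiplicity p L) \<le> real K * real (multiplicity p g)"
      using mg by (simp add: divide_le_eq)
    then have "multiplicity p L \<le> K * multiplicity p g"
      by (metis of_nat_le_iff of_nat_mult)
    also have "\<dots> = multiplicity p (g ^ K)"
      using p g0 by (simp add: prime_elem_multiplicity_power_distrib)
    finally show ?thesis .
  qed
qed

theorem corollary3p11:
  fixes A B :: int and L :: nat
  assumes "A \<noteq> 0" and "B \<noteq> 0" and "L > 0"
    and "\<forall>p::nat. prime p \<and> p dvd L \<longrightarrow> p dvd nat (gcd A B)"
  shows "(L \<in> G_set A B \<longleftrightarrow> (\<exists>K::nat. K > 0 \<and> K \<ge> gamma (nat (gcd A B)) L))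
         \<and> L \<in> G_set A B
         \<and> (\<forall>K::nat. K > 0 \<and> K \<ge> gamma (nat (gcd A B)) L \<longrightarrow> int L dvd A ^ K + B ^ K)"
proof -
  let ?g = "nat (gcd A B)"
  have g0: "?g > 0" using assms(1) by simp
  have main: "int L dvd A ^ K + B ^ K" if K: "K \<ge> gamma ?g L" for K
  proof -
    have "L dvd ?g ^ K" by (rule key_dvd[OF g0 assms(3) assms(4) K])
    then have "int L dvd (gcd A B) ^ K"
      by (metis gcd_ge_0_int int_dvd_int_iff int_nat_eq of_nat_power)
    moreover have "(gcd A B) ^ K dvd A ^ K + B ^ K"
      by (simp add: dvd_add dvd_power_same)
    ultimately show ?thesis by (rule dvd_trans)
  qed
  define K0 where "K0 = max 1 (gamma ?g L)"
  have ex: "\<exists>K::nat. K > 0 \<and> K \<ge> gamma ?g L" by (rule exI[of _ K0]) (simp add: K0_def)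
  have G: "L \<in> G_set A B"
    unfolding G_set_def using assms(3) main[of K0] by (auto simp: K0_def intro!: exI[of _ K0])
  show ?thesis using ex G main by blast
qed

end
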